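(* Let $F:\mathbb{R}\to\mathbb{R}$, $b\in\mathbb{R}$ and $\gamma>0$ satisfy A1 and A2, with $\nu,\omega^{(0)},\Lambda_j,V$ as in the context. Then $\Lambda_j\in\mathbb{R}\setminus\{0\}$ for $1\le j\le\nu$; $V(\omega^{(0)})(e_j+e_l)\in\mathbb{R}\setminus\{0\}$ for $1\le j,l\le\nu$; and $V(\omega^{(0)})(e_j-e_l)\in\mathbb{R}\setminus\{0\}$ for $1\le j\ne l\le\nu$.
   Context: A1: $F$ is real analytic in a neighborhood of $-b$ with $F'(-b)>0$. A2: $0<\gamma<\sqrt{F'(-b)}$ and $2\sqrt{F'(-b)}\notin\gamma\mathbb{Z}$. $\nu$ is the integer with $\nu\gamma<2\sqrt{F'(-b)}<(\nu+1)\gamma$; $\omega^{(0)}_j=2\arcsin(j\gamma/(2\sqrt{F'(-b)}))$, $\omega^{(0)}=(\omega^{(0)}_1,\dots,\omega^{(0)}_\nu)$; $g=(1,\dots,\nu)$; $e_j$ the $j$-th unit vector in $\mathbb{Z}^\nu$; $\Lambda_j=\frac{(j\gamma)^2\cos(\omega^{(0)}_j/2)}{4\sin^3(\omega^{(0)}_j/2)}$; for $m\in\mathbb{Z}^\nu$, $V(\omega)(m)=F'(-b)$ if $\langle g,m\rangle=0$ and $V(\omega)(m)=F'(-b)-\frac{\langle g,m\rangle^2\gamma^2}{4\sin^2(\langle\omega,m\rangle/2)}$ otherwise (with value $\infty$ if $\langle g,m\rangle\ne0$ and $\langle\omega,m\rangle\in2\pi\mathbb{Z}$). *)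

theory Defs
  imports "HOL-Analysis.Analysis"
begin

definition real_analytic_at :: "(real \<Rightarrow> real) \<Rightarrow> real \<Rightarrow> bool" where
  "real_analytic_at F x0 \<longleftrightarrow>
     (\<exists>\<delta>>0. \<exists>c :: nat \<Rightarrow> real. \<forall>x. \<bar>x - x0\<bar> < \<delta> \<longrightarrow> (\<lambda>n. c n * (x - x0) ^ n) sums F x)"

text \<open>Vectors in Z^nu / R^nu are functions on nat, only the indices 1..nu matter.\<close>
definition ipZ :: "nat \<Rightarrow> (nat \<Rightarrow> real) \<Rightarrow> (nat \<Rightarrow> int) \<Rightarrow> real" where
  "ipZ \<nu> w m = (\<Sum>k=1..\<nu>. w k * real_of_int (m k))"

definition gvec :: "nat \<Rightarrow> real" where "gvec k = real k"

definition unitv :: "nat \<Rightarrow> nat \<Rightarrow> int" where "unitv j = (\<lambda>k. if k = j then 1 else 0)"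

definition omega0 :: "real \<Rightarrow> real \<Rightarrow> nat \<Rightarrow> real" where
  "omega0 Fp \<gamma> j = 2 * arcsin (real j * \<gamma> / (2 * sqrt Fp))"

definition Lambda :: "real \<Rightarrow> real \<Rightarrow> nat \<Rightarrow> real" where
  "Lambda Fp \<gamma> j = (real j * \<gamma>)\<^sup>2 * cos (omega0 Fp \<gamma> j / 2) / (4 * (sin (omega0 Fp \<gamma> j / 2)) ^ 3)"

text \<open>V(omega)(m), with value infinity in the singular case; Fp stands for F'(-b).\<close>
definition Vfun :: "real \<Rightarrow> real \<Rightarrow> nat \<Rightarrow> (nat \<Rightarrow> real) \<Rightarrow> (nat \<Rightarrow> int) \<Rightarrow> ereal" where
  "Vfun Fp \<gamma> \<nu> w m =
     (if ipZ \<nu> gvec m = 0 then ereal Fp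
      else if (\<exists>k::int. ipZ \<nu> w m = 2 * pi * real_of_int k) then PInfty
      else ereal (Fp - (ipZ \<nu> gvec m)\<^sup>2 * \<gamma>\<^sup>2 / (4 * (sin (ipZ \<nu> w m / 2))\<^sup>2)))"

end

theory Submission
  imports Defs
begin

lemma ipZ_unit:
  assumes "j \<in> {1..\<nu>}"
  shows "(\<Sum>k=1..\<nu>. w k * real_of_int (unitv j k)) = w j"
proof -
  have "(\<Sum>k=1..\<nu>. w k * real_of_int (unitv j k)) = (\<Sum>k=1..\<nu>. if k = j then w k else 0)"
    by (intro sum.cong) (auto simp: unitv_def)
  also have "\<dots> = w j" using assms by (simp add: sum.delta)
  finally show ?thesis .
qed

lemma ipZ_pair:
  assumes "j \<in> {1..\<nu>}" "l \<in> {1..\<nu>}"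
  shows "ipZ \<nu> w (\<lambda>k. unitv j k + unitv l k) = w j + w l"
    and "ipZ \<nu> w (\<lambda>k. unitv j k - unitv l k) = w j - w l"
  using ipZ_unit[OF assms(1), of w] ipZ_unit[OF assms(2), of w]
  by (simp_all add: ipZ_def distrib_left right_diff_distrib sum.distrib sum_subtractf)

lemma V_lemma:
  assumes "ipZ \<nu> gvec m = G" "G \<noteq> 0" "ipZ \<nu> w m = \<theta>" "sin (\<theta>/2) \<noteq> 0" "Fp > 0"
    "G * \<gamma> = 2 * sqrt Fp * d" "(sin (\<theta>/2))\<^sup>2 \<noteq> d\<^sup>2"
  shows "\<exists>r. r \<noteq> 0 \<and> Vfun Fp \<gamma> \<nu> w m = ereal r"
proof -
  have nk: "\<not> (\<exists>k::int. \<theta> = 2 * pi * real_of_int k)"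
  proof
    assume "\<exists>k::int. \<theta> = 2 * pi * real_of_int k"
    then obtain k :: int where "\<theta> = 2 * pi * real_of_int k" by blast
    hence "\<theta>/2 = real_of_int k * pi" by simp
    hence "sin (\<theta>/2) = 0" by (simp add: sin_zero_iff_int2)
    with assms(4) show False by simp
  qed
  have GG: "G\<^sup>2 * \<gamma>\<^sup>2 = 4 * Fp * d\<^sup>2"
  proof -
    have "G\<^sup>2 * \<gamma>\<^sup>2 = (G*\<gamma>)\<^sup>2" by (simp add: power_mult_distrib)
    also have "\<dots> = 4 * (sqrt Fp)\<^sup>2 * d\<^sup>2" using assms(6) by (simp add: power_mult_distrib)
    finally show ?thesis using assms(5) by simp
  qed
  define S where "S = sin (\<theta>/2)"
  have S0: "S\<^sup>2 \<noteq> 0" using assms(4) S_def by simp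
  have "Fp - G\<^sup>2 * \<gamma>\<^sup>2 / (4 * S\<^sup>2) = Fp * (S\<^sup>2 - d\<^sup>2) / S\<^sup>2"
    using S0 GG by (simp add: field_simps)
  moreover have "Fp * (S\<^sup>2 - d\<^sup>2) / S\<^sup>2 \<noteq> 0" using S0 assms(5,7) S_def by simp
  ultimately show ?thesis using assms(1,2,3) nk unfolding Vfun_def S_def by auto
qed

lemma angle_facts:
  assumes "Fp > 0" "\<gamma> > 0" "real \<nu> * \<gamma> < 2 * sqrt Fp" "j \<in> {1..\<nu>}"
  defines "x \<equiv> real j * \<gamma> / (2 * sqrt Fp)"
  shows "0 < x" "x < 1" "sin (omega0 Fp \<gamma> j / 2) = x" "cos (omega0 Fp \<gamma> j / 2) = sqrt (1 - x\<^sup>2)"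
    "real j * \<gamma> = 2 * sqrt Fp * x"
proof -
  have s: "sqrt Fp > 0" using assms(1) by simp
  show x0: "0 < x" using assms s unfolding x_def by auto
  have "real j * \<gamma> \<le> real \<nu> * \<gamma>" using assms(2,4) by (simp add: mult_right_mono)
  hence "real j * \<gamma> < 2 * sqrt Fp" using assms(3) by linarith
  thus x1: "x < 1" unfolding x_def using s by simp
  have o: "omega0 Fp \<gamma> j / 2 = arcsin x" unfolding omega0_def x_def by simp
  show "sin (omega0 Fp \<gamma> j / 2) = x" using o x0 x1 by (simp add: sin_arcsin)
  show "cos (omega0 Fp \<gamma> j / 2) = sqrt (1 - x\<^sup>2)" using o x0 x1 by (simp add: cos_arcsin)
  show "real j * \<gamma> = 2 * sqrt Fp * x" unfolding x_def using s by simp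
qed

lemma diff_ineq:
  fixes x y :: real
  assumes "0 < y" "y < x" "x < 1"
  shows "x * sqrt (1 - y\<^sup>2) - sqrt (1 - x\<^sup>2) * y > x - y"
proof -
  define ca where "ca = sqrt (1 - x\<^sup>2)"
  define cb where "cb = sqrt (1 - y\<^sup>2)"
  have x2: "x\<^sup>2 < 1" "y\<^sup>2 < x\<^sup>2" using assms by (simp_all add: power_strict_mono abs_less_iff power2_less_1_iff)
  have ca2: "ca\<^sup>2 = 1 - x\<^sup>2" unfolding ca_def using x2 by simp
  have cb2: "cb\<^sup>2 = 1 - y\<^sup>2" unfolding cb_def using x2 by simp
  have ca0: "ca \<ge> 0" "cb \<ge> 0" unfolding ca_def cb_def
    by (rule real_sqrt_ge_zero, use x2 in linarith)+
  have cacb: "ca < cb" unfolding ca_def cb_def using x2 by simp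
  have e1: "(1 - ca) * (1 + ca) = x\<^sup>2" using ca2 by (simp add: algebra_simps power2_eq_square)
  have e2: "(1 - cb) * (1 + cb) = y\<^sup>2" using cb2 by (simp add: algebra_simps power2_eq_square)
  have k: "x * (1 + cb) > y * (1 + ca)"
    using assms ca0 cacb by (smt (verit) mult_strict_mono)
  have "y * (1 - ca) * ((1 + ca) * (1 + cb)) = y * ((1 - ca) * (1 + ca)) * (1 + cb)"
    by (simp only: mult.assoc mult.commute mult.left_commute)
  also have "\<dots> = x * y * (x * (1 + cb))" unfolding e1 by (simp add: power2_eq_square)
  finally have q1: "y * (1 - ca) * ((1 + ca) * (1 + cb)) = x * y * (x * (1 + cb))" .
  have q2: "x * (1 - cb) * ((1 + ca) * (1 + cb)) = x * y * (y * (1 + ca))"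
  proof -
    have "x * (1 - cb) * ((1 + ca) * (1 + cb)) = x * ((1 - cb) * (1 + cb)) * (1 + ca)"
      by (simp only: mult.assoc mult.commute mult.left_commute)
    also have "\<dots> = x * y * (y * (1 + ca))" unfolding e2 by (simp add: power2_eq_square)
    finally show ?thesis .
  qed
  have q3: "x * y * (x * (1 + cb)) > x * y * (y * (1 + ca))"
    using k assms by simp
  have "y * (1 - ca) * ((1 + ca) * (1 + cb)) > x * (1 - cb) * ((1 + ca) * (1 + cb))"
    unfolding q1 q2 by (rule q3)
  moreover have "(1 + ca) * (1 + cb) > 0" using ca0 by simp
  ultimately have "y * (1 - ca) > x * (1 - cb)"
    by (meson mult_less_cancel_right_pos)
  thus ?thesis unfolding ca_def[symmetric] cb_def[symmetric] by (simp add: algebra_simps)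
qed

lemma sqrt_facts:
  fixes x :: real
  assumes "0 < x" "x < 1"
  shows "x\<^sup>2 < 1" "0 < sqrt (1 - x\<^sup>2)" "sqrt (1 - x\<^sup>2) < 1"
proof -
  have a: "x * x < x * 1" using mult_strict_left_mono[OF assms(2) assms(1)] .
  show x2: "x\<^sup>2 < 1" using a assms(2) unfolding power2_eq_square by linarith
  show "0 < sqrt (1 - x\<^sup>2)" using x2 by simp
  have "x\<^sup>2 > 0" using assms by simp
  thus "sqrt (1 - x\<^sup>2) < 1" by simp
qed

theorem lemma11:
  fixes F :: "real \<Rightarrow> real" and b \<gamma> :: real and \<nu> :: nat
  assumes A1: "real_analytic_at F (-b)" and Fpos: "deriv F (-b) > 0"
    and A2: "0 < \<gamma>" "\<gamma> < sqrt (deriv F (-b))"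
    and nonres: "\<forall>k::int. 2 * sqrt (deriv F (-b)) \<noteq> \<gamma> * real_of_int k"
    and nu: "real \<nu> * \<gamma> < 2 * sqrt (deriv F (-b))"
            "2 * sqrt (deriv F (-b)) < (real \<nu> + 1) * \<gamma>"
  shows "(\<forall>j\<in>{1..\<nu>}. Lambda (deriv F (-b)) \<gamma> j \<noteq> 0)
       \<and> (\<forall>j\<in>{1..\<nu>}. \<forall>l\<in>{1..\<nu>}. \<exists>r::real. r \<noteq> 0 \<and>
            Vfun (deriv F (-b)) \<gamma> \<nu> (omega0 (deriv F (-b)) \<gamma>) (\<lambda>k. unitv j k + unitv l k) = ereal r)
       \<and> (\<forall>j\<in>{1..\<nu>}. \<forall>l\<in>{1..\<nu>}. j \<noteq> l \<longrightarrow> (\<exists>r::real. r \<noteq> 0 \<and>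
            Vfun (deriv F (-b)) \<gamma> \<nu> (omega0 (deriv F (-b)) \<gamma>) (\<lambda>k. unitv j k - unitv l k) = ereal r))"
proof -
  define Fp where "Fp = deriv F (-b)"
  have Fp: "Fp > 0" "real \<nu> * \<gamma> < 2 * sqrt Fp" using Fpos nu unfolding Fp_def by auto
  note af = angle_facts[OF Fp(1) A2(1) Fp(2)]
  define x where "x = (\<lambda>j. real j * \<gamma> / (2 * sqrt Fp))"
  have P1: "\<forall>j\<in>{1..\<nu>}. Lambda Fp \<gamma> j \<noteq> 0"
  proof
    fix j assume j: "j \<in> {1..\<nu>}"
    have "cos (omega0 Fp \<gamma> j / 2) > 0" "sin (omega0 Fp \<gamma> j / 2) > 0"
      using af(1-4)[OF j] sqrt_facts[OF af(1,2)[OF j]] by simp_all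
    moreover have "real j * \<gamma> \<noteq> 0" using j A2 by auto
    ultimately show "Lambda Fp \<gamma> j \<noteq> 0" unfolding Lambda_def by simp
  qed
  have P2: "\<forall>j\<in>{1..\<nu>}. \<forall>l\<in>{1..\<nu>}. \<exists>r::real. r \<noteq> 0 \<and>
            Vfun Fp \<gamma> \<nu> (omega0 Fp \<gamma>) (\<lambda>k. unitv j k + unitv l k) = ereal r"
  proof (intro ballI)
    fix j l assume j: "j \<in> {1..\<nu>}" and l: "l \<in> {1..\<nu>}"
    let ?a = "omega0 Fp \<gamma> j / 2" and ?b = "omega0 Fp \<gamma> l / 2"
    have S: "sin ((omega0 Fp \<gamma> j + omega0 Fp \<gamma> l) / 2) = x j * sqrt (1 - (x l)\<^sup>2) + sqrt (1 - (x j)\<^sup>2) * x l"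
    proof -
      have e: "(omega0 Fp \<gamma> j + omega0 Fp \<gamma> l) / 2 = ?a + ?b" by simp
      have sj: "sin ?a = x j" "cos ?a = sqrt (1 - (x j)\<^sup>2)" using af(3,4)[OF j] unfolding x_def by auto
      have sl: "sin ?b = x l" "cos ?b = sqrt (1 - (x l)\<^sup>2)" using af(3,4)[OF l] unfolding x_def by auto
      show ?thesis unfolding e sin_add sj sl by simp
    qed
    have xj: "0 < x j" "x j < 1" and xl: "0 < x l" "x l < 1" using af(1,2)[OF j] af(1,2)[OF l] unfolding x_def by auto
    have cj: "0 < sqrt (1 - (x j)\<^sup>2)" "sqrt (1 - (x j)\<^sup>2) < 1"
      using sqrt_facts[OF xj] by auto
    have cl: "0 < sqrt (1 - (x l)\<^sup>2)" "sqrt (1 - (x l)\<^sup>2) < 1"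
      using sqrt_facts[OF xl] by auto
    have pos: "x j * sqrt (1 - (x l)\<^sup>2) + sqrt (1 - (x j)\<^sup>2) * x l > 0"
      using mult_pos_pos[OF xj(1) cl(1)] mult_pos_pos[OF cj(1) xl(1)] by linarith
    have lt: "x j * sqrt (1 - (x l)\<^sup>2) + sqrt (1 - (x j)\<^sup>2) * x l < x j + x l"
    proof -
      have "x j * sqrt (1 - (x l)\<^sup>2) < x j" using xj cl by simp
      moreover have "sqrt (1 - (x j)\<^sup>2) * x l < x l" using xl cj by simp
      ultimately show ?thesis by simp
    qed
    have sq: "(x j * sqrt (1 - (x l)\<^sup>2) + sqrt (1 - (x j)\<^sup>2) * x l)\<^sup>2 \<noteq> (x j + x l)\<^sup>2"
      using power_strict_mono[OF lt, of 2] pos by simp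
    show "\<exists>r::real. r \<noteq> 0 \<and> Vfun Fp \<gamma> \<nu> (omega0 Fp \<gamma>) (\<lambda>k. unitv j k + unitv l k) = ereal r"
    proof (rule V_lemma[OF _ _ _ _ Fp(1)])
      show "ipZ \<nu> gvec (\<lambda>k. unitv j k + unitv l k) = real j + real l"
        using ipZ_pair(1)[OF j l] by (simp add: gvec_def)
      show "real j + real l \<noteq> 0" using j by simp
      show "ipZ \<nu> (omega0 Fp \<gamma>) (\<lambda>k. unitv j k + unitv l k) = omega0 Fp \<gamma> j + omega0 Fp \<gamma> l"
        using ipZ_pair(1)[OF j l] .
      show "sin ((omega0 Fp \<gamma> j + omega0 Fp \<gamma> l) / 2) \<noteq> 0" using S pos by simp
      show "(real j + real l) * \<gamma> = 2 * sqrt Fp * (x j + x l)"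
        using Fp(1) unfolding x_def by (simp add: field_simps)
      show "(sin ((omega0 Fp \<gamma> j + omega0 Fp \<gamma> l) / 2))\<^sup>2 \<noteq> (x j + x l)\<^sup>2"
        using S sq by simp
    qed
  qed
  have P3: "\<forall>j\<in>{1..\<nu>}. \<forall>l\<in>{1..\<nu>}. j \<noteq> l \<longrightarrow> (\<exists>r::real. r \<noteq> 0 \<and>
            Vfun Fp \<gamma> \<nu> (omega0 Fp \<gamma>) (\<lambda>k. unitv j k - unitv l k) = ereal r)"
  proof (intro ballI impI)
    fix j l assume j: "j \<in> {1..\<nu>}" and l: "l \<in> {1..\<nu>}" and jl: "j \<noteq> l"
    let ?a = "omega0 Fp \<gamma> j / 2" and ?b = "omega0 Fp \<gamma> l / 2"
    define S where "S = x j * sqrt (1 - (x l)\<^sup>2) - sqrt (1 - (x j)\<^sup>2) * x l"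
    have SS: "sin ((omega0 Fp \<gamma> j - omega0 Fp \<gamma> l) / 2) = S"
    proof -
      have e: "(omega0 Fp \<gamma> j - omega0 Fp \<gamma> l) / 2 = ?a - ?b" by simp
      have sj: "sin ?a = x j" "cos ?a = sqrt (1 - (x j)\<^sup>2)" using af(3,4)[OF j] unfolding x_def by auto
      have sl: "sin ?b = x l" "cos ?b = sqrt (1 - (x l)\<^sup>2)" using af(3,4)[OF l] unfolding x_def by auto
      show ?thesis unfolding e sin_diff sj sl S_def by simp
    qed
    have xj: "0 < x j" "x j < 1" and xl: "0 < x l" "x l < 1" using af(1,2)[OF j] af(1,2)[OF l] unfolding x_def by auto
    have xne: "x j \<noteq> x l"
    proof
      assume eq: "x j = x l"
      have s0: "2 * sqrt Fp \<noteq> 0" using Fp(1) by simp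
      have h1: "x j * (2 * sqrt Fp) = real j * \<gamma>" and h2: "x l * (2 * sqrt Fp) = real l * \<gamma>"
        unfolding x_def using s0 by simp_all
      have "real j * \<gamma> = x j * (2 * sqrt Fp)" by (rule h1[symmetric])
      also have "\<dots> = x l * (2 * sqrt Fp)" by (simp only: eq)
      also have "\<dots> = real l * \<gamma>" by (rule h2)
      finally have f: "real j * \<gamma> = real l * \<gamma>" .
      have g0: "\<gamma> \<noteq> 0" using A2(1) by simp
      have "real j = real l" using f unfolding mult_right_cancel[OF g0] .
      hence "j = l" by (rule of_nat_eq_iff[THEN iffD1])
      with jl show False by simp
    qed
    have key: "\<bar>S\<bar> > \<bar>x j - x l\<bar>"
    proof (cases "x l < x j")
      case True
      have "S > x j - x l" using diff_ineq[OF xl(1) True xj(2)] unfolding S_def .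
      thus ?thesis using True by simp
    next
      case False
      hence lt: "x j < x l" using xne by simp
      have "x l * sqrt (1 - (x j)\<^sup>2) - sqrt (1 - (x l)\<^sup>2) * x j > x l - x j"
        using diff_ineq[OF xj(1) lt xl(2)] .
      hence "-S > x l - x j" unfolding S_def by (simp add: algebra_simps)
      thus ?thesis using lt by simp
    qed
    have Sne: "S \<noteq> 0" using key by simp
    have sq: "S\<^sup>2 \<noteq> (x j - x l)\<^sup>2"
    proof
      assume "S\<^sup>2 = (x j - x l)\<^sup>2"
      hence "sqrt (S\<^sup>2) = sqrt ((x j - x l)\<^sup>2)" by (simp only:)
      hence "\<bar>S\<bar> = \<bar>x j - x l\<bar>" by (simp only: real_sqrt_abs)
      with key show False by simp
    qed
    show "\<exists>r::real. r \<noteq> 0 \<and> Vfun Fp \<gamma> \<nu> (omega0 Fp \<gamma>) (\<lambda>k. unitv j k - unitv l k) = ereal r"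
    proof (rule V_lemma[OF _ _ _ _ Fp(1)])
      show "ipZ \<nu> gvec (\<lambda>k. unitv j k - unitv l k) = real j - real l"
        using ipZ_pair(2)[OF j l] by (simp add: gvec_def)
      show "real j - real l \<noteq> 0" using jl by simp
      show "ipZ \<nu> (omega0 Fp \<gamma>) (\<lambda>k. unitv j k - unitv l k) = omega0 Fp \<gamma> j - omega0 Fp \<gamma> l"
        using ipZ_pair(2)[OF j l] .
      show "sin ((omega0 Fp \<gamma> j - omega0 Fp \<gamma> l) / 2) \<noteq> 0" using SS Sne by simp
      show "(real j - real l) * \<gamma> = 2 * sqrt Fp * (x j - x l)"
        using Fp(1) unfolding x_def by (simp add: field_simps)
      show "(sin ((omega0 Fp \<gamma> j - omega0 Fp \<gamma> l) / 2))\<^sup>2 \<noteq> (x j - x l)\<^sup>2"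
        using SS sq by simp
    qed
  qed
  show ?thesis using P1 P2 P3 unfolding Fp_def by blast
qed

end
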